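(* Let $n\ge 2$ and let $S=[A_0,\dots,A_n]$ be a regular $n$-simplex lying in $\mathbb{R}^m$ for some $m\ge n+1$, with edge length $u$ and circumradius $R$. Let $Q_0$ be the reflection of $A_0$ in the affine hull $H_0$ of the facet $[A_1,\dots,A_n]$, and let $\Omega$ be the set of all points $Q\in\mathbb{R}^m$ for which the $n$-simplex $[Q,A_1,\dots,A_n]$ is regular. Then $$\{\|Q-A_0\|:Q\in\Omega\}=\Big[0,\sqrt{\tfrac{2(n+1)}{n}}\,u\Big]=\Big[0,\tfrac{2(n+1)}{n}R\Big],$$ with the extreme values attained at $Q=A_0$ and $Q=Q_0$.
   Context: An $n$-simplex is the convex hull of $n+1$ affinely independent points; it is regular if all its edges have the same length. Its circumradius is the radius of the $(n-1)$-sphere (in its affine hull) through all its vertices. *)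

theory Defs
  imports "HOL-Analysis.Analysis"
begin

definition is_simplex :: "nat \<Rightarrow> (nat \<Rightarrow> 'a::euclidean_space) \<Rightarrow> bool" where
  "is_simplex n A \<longleftrightarrow> inj_on A {0..n} \<and> \<not> affine_dependent (A ` {0..n})"

definition regular_simplex :: "nat \<Rightarrow> (nat \<Rightarrow> 'a::euclidean_space) \<Rightarrow> bool" where
  "regular_simplex n A \<longleftrightarrow> is_simplex n A \<and>
     (\<forall>i\<in>{0..n}. \<forall>j\<in>{0..n}. \<forall>k\<in>{0..n}. \<forall>l\<in>{0..n}.
        i \<noteq> j \<longrightarrow> k \<noteq> l \<longrightarrow> dist (A i) (A j) = dist (A k) (A l))"

definition circumradius :: "nat \<Rightarrow> (nat \<Rightarrow> 'a::euclidean_space) \<Rightarrow> real" where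
  "circumradius n A = (THE r. \<exists>c \<in> affine hull (A ` {0..n}). \<forall>i\<in>{0..n}. dist c (A i) = r)"

definition reflect_in :: "'a::euclidean_space set \<Rightarrow> 'a \<Rightarrow> 'a" where
  "reflect_in H x = 2 *\<^sub>R closest_point H x - x"

end

theory Submission imports Defs begin
lemma polar:
  fixes x y z :: "'a::real_inner"
  shows "(x - z) \<bullet> (y - z) = ((dist x z)^2 + (dist y z)^2 - (dist x y)^2)/2"
  by (simp add: dist_norm power2_norm_eq_inner inner_diff algebra_simps inner_commute)

lemma equilateral_regular:
  fixes A :: "nat \<Rightarrow> 'a::euclidean_space"
  assumes u: "u > 0" and d: "\<forall>i\<in>{0..n}. \<forall>j\<in>{0..n}. i \<noteq> j \<longrightarrow> dist (A i) (A j) = u"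
  shows "regular_simplex n A"
proof -
  have inj: "inj_on A {0..n}"
  proof (rule inj_onI)
    fix x y assume xy: "x \<in> {0..n}" "y \<in> {0..n}" "A x = A y"
    show "x = y"
    proof (rule ccontr)
      assume "x \<noteq> y"
      then have "dist (A x) (A y) = u" using d xy by blast
      then show False using xy u by simp
    qed
  qed
  define a where "a i = A i - A 0" for i
  have aa: "a i \<bullet> a j = (if i = j then u^2 else u^2/2)" if "i \<in> {1..n}" "j \<in> {1..n}" for i j
  proof -
    have "a i \<bullet> a j = ((dist (A i) (A 0))^2 + (dist (A j) (A 0))^2 - (dist (A i) (A j))^2)/2"
      unfolding a_def by (rule polar)
    also have "\<dots> = (if i = j then u^2 else u^2/2)"
    proof -
      have "dist (A i) (A 0) = u" "dist (A j) (A 0) = u" using d that by auto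
      moreover have "i \<noteq> j \<Longrightarrow> dist (A i) (A j) = u" using d that by auto
      ultimately show ?thesis by (auto simp: power2_eq_square)
    qed
    finally show ?thesis .
  qed
  have injA: "inj_on a {1..n}"
  proof (rule inj_onI)
    fix x y assume xy: "x \<in> {1..n}" "y \<in> {1..n}" "a x = a y"
    then have "A x = A y" by (simp add: a_def)
    then show "x = y" using inj_onD[OF inj] xy by auto
  qed
  have notin: "A 0 \<notin> A ` {1..n}"
  proof
    assume "A 0 \<in> A ` {1..n}"
    then obtain x where x: "x \<in> {1..n}" "A 0 = A x" by auto
    then have "0 = x" using inj_onD[OF inj x(2)] by auto
    then show False using x by simp
  qed
  have eqs: "A ` {0..n} = insert (A 0) (A ` {1..n})" 
  proof -
    have "{0..n} = insert 0 {1..n}" by auto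
    then show ?thesis by simp
  qed
  have V: "(\<lambda>x. - A 0 + x) ` (A ` {1..n}) = a ` {1..n}"
    by (auto simp: a_def image_def)
  have "\<not> dependent (a ` {1..n})"
  proof
    assume "dependent (a ` {1..n})"
    then obtain c where c: "\<exists>v\<in>a ` {1..n}. c v \<noteq> 0" "(\<Sum>v\<in>a ` {1..n}. c v *\<^sub>R v) = 0"
      using dependent_finite[of "a ` {1..n}"] by auto
    define dd where "dd i = c (a i)" for i
    have s0: "(\<Sum>i\<in>{1..n}. dd i *\<^sub>R a i) = 0"
    proof -
      have "(\<Sum>v\<in>a ` {1..n}. c v *\<^sub>R v) = (\<Sum>i\<in>{1..n}. dd i *\<^sub>R a i)"
        by (rule sum.reindex_cong[OF injA refl]) (simp add: dd_def)
      then show ?thesis using c(2) by simp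
    qed
    have dj: "dd j = - sum dd {1..n}" if j: "j \<in> {1..n}" for j
    proof -
      have "0 = (\<Sum>i\<in>{1..n}. dd i *\<^sub>R a i) \<bullet> a j" using s0 by simp
      also have "\<dots> = (\<Sum>i\<in>{1..n}. dd i * (a i \<bullet> a j))" by (simp add: inner_sum_left)
      also have "\<dots> = (\<Sum>i\<in>{1..n}. u^2/2 * dd i + (if i = j then u^2/2 * dd i else 0))"
      proof (rule sum.cong)
        fix i assume i: "i \<in> {1..n}"
        show "dd i * (a i \<bullet> a j) = u^2/2 * dd i + (if i = j then u^2/2 * dd i else 0)"
          using aa[OF i j] by (auto simp: algebra_simps)
      qed simp
      also have "\<dots> = u^2/2 * sum dd {1..n} + u^2/2 * dd j"
        using j by (simp add: sum.distrib sum_distrib_left)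
      finally have "u^2/2 * (sum dd {1..n} + dd j) = 0" by (simp add: algebra_simps)
      moreover have "u^2/2 \<noteq> 0" using u by simp
      ultimately show ?thesis by simp
    qed
    have "sum dd {1..n} = (\<Sum>j\<in>{1..n}. - sum dd {1..n})" by (rule sum.cong[OF refl dj])
    also have "\<dots> = - (real n * sum dd {1..n})" by simp
    finally have "sum dd {1..n} * (1 + real n) = 0" by (simp add: algebra_simps)
    then have S0: "sum dd {1..n} = 0" by simp
    have "\<forall>j\<in>{1..n}. dd j = 0"
    proof
      fix j assume j: "j \<in> {1..n}"
      show "dd j = 0" using dj[OF j] S0 by linarith
    qed
    then show False using c(1) dd_def by auto
  qed
  then have "\<not> affine_dependent (A ` {0..n})"
    unfolding eqs using affine_dependent_iff_dependent[OF notin] V by simp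
  moreover have "\<forall>i\<in>{0..n}. \<forall>j\<in>{0..n}. \<forall>k\<in>{0..n}. \<forall>l\<in>{0..n}.
        i \<noteq> j \<longrightarrow> k \<noteq> l \<longrightarrow> dist (A i) (A j) = dist (A k) (A l)"
  proof (intro ballI impI)
    fix i j k l assume "i \<in> {0..n}" "j \<in> {0..n}" "k \<in> {0..n}" "l \<in> {0..n}" "i \<noteq> j" "k \<noteq> l"
    then show "dist (A i) (A j) = dist (A k) (A l)" using d by simp
  qed
  ultimately show ?thesis using inj unfolding regular_simplex_def is_simplex_def by blast
qed


lemma sum_center:
  fixes C :: "'a::real_vector"
  assumes "sum l S = 1"
  shows "(\<Sum>v\<in>S. l v *\<^sub>R (v - C)) = (\<Sum>v\<in>S. l v *\<^sub>R v) - C"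
proof -
  have "(\<Sum>v\<in>S. l v *\<^sub>R C) = C" using assms by (simp flip: scaleR_sum_left)
  then show ?thesis by (simp add: scaleR_diff_right sum_subtractf)
qed

lemma centroid_unique:
  fixes S :: "'a::euclidean_space set"
  assumes fin: "finite S" and c: "c \<in> affine hull S" and mu: "sum mu S = 1"
    and C: "C = (\<Sum>v\<in>S. mu v *\<^sub>R v)" and K: "\<forall>v\<in>S. (c - C) \<bullet> (v - C) = K"
  shows "c = C"
proof -
  obtain l where l: "sum l S = 1" "(\<Sum>v\<in>S. l v *\<^sub>R v) = c"
    using c affine_hull_finite[OF fin] by auto
  have "c - C = (\<Sum>v\<in>S. l v *\<^sub>R (v - C))" using sum_center[OF l(1)] l(2) by simp
  then have "(c - C) \<bullet> (c - C) = (\<Sum>v\<in>S. l v * ((c - C) \<bullet> (v - C)))"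
    by (simp add: inner_sum_right)
  also have "\<dots> = (\<Sum>v\<in>S. l v * K)" using K by simp
  also have "\<dots> = K" using l(1) by (simp flip: sum_distrib_right)
  finally have 1: "(c - C) \<bullet> (c - C) = K" .
  have "0 = (\<Sum>v\<in>S. mu v *\<^sub>R (v - C))" using sum_center[OF mu] C by simp
  then have "0 = (c - C) \<bullet> (\<Sum>v\<in>S. mu v *\<^sub>R (v - C))" by simp
  also have "\<dots> = (\<Sum>v\<in>S. mu v * ((c - C) \<bullet> (v - C)))" by (simp add: inner_sum_right)
  also have "\<dots> = (\<Sum>v\<in>S. mu v * K)" using K by simp
  also have "\<dots> = K" using mu by (simp flip: sum_distrib_right)
  finally have "K = 0" by simp
  with 1 show ?thesis by simp
qed

lemma equi_geom:
  fixes A :: "nat \<Rightarrow> 'a::euclidean_space"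
  assumes u: "u > 0" and n: "n \<ge> 1"
    and d: "\<forall>i\<in>{0..n}. \<forall>j\<in>{0..n}. i \<noteq> j \<longrightarrow> dist (A i) (A j) = u"
    and G: "G = (1 / real n) *\<^sub>R (\<Sum>i\<in>{1..n}. A i)"
  shows "(A 0 - G) \<bullet> (A 0 - G) = u^2 * (real n + 1) / (2 * real n)"
    and "\<forall>i\<in>{1..n}. (A i - G) \<bullet> (A 0 - G) = 0"
    and "\<forall>i\<in>{1..n}. (A i - G) \<bullet> (A i - G) = u^2 * (real n - 1) / (2 * real n)"
    and "(\<Sum>i\<in>{1..n}. A i - G) = 0"
proof -
  define a where "a i = A i - A 0" for i
  have aa: "a i \<bullet> a j = (if i = j then u^2 else u^2/2)" if "i \<in> {1..n}" "j \<in> {1..n}" for i j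
  proof -
    have "a i \<bullet> a j = ((dist (A i) (A 0))^2 + (dist (A j) (A 0))^2 - (dist (A i) (A j))^2)/2"
      unfolding a_def by (rule polar)
    also have "\<dots> = (if i = j then u^2 else u^2/2)"
    proof -
      have "dist (A i) (A 0) = u" "dist (A j) (A 0) = u" using d that by auto
      moreover have "i \<noteq> j \<Longrightarrow> dist (A i) (A j) = u" using d that by auto
      ultimately show ?thesis by (auto simp: power2_eq_square)
    qed
    finally show ?thesis .
  qed
  define s where "s = (\<Sum>i\<in>{1..n}. a i)"
  have nz: "real n \<noteq> 0" using n by simp
  have sumA: "(\<Sum>i\<in>{1..n}. A i) = s + real n *\<^sub>R A 0"
    by (simp add: s_def a_def sum_subtractf sum_constant_scaleR)
  have e: "A 0 - G = - (1 / real n) *\<^sub>R s"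
    unfolding G sumA using nz by (simp add: scaleR_add_right)
  have as: "a j \<bullet> s = (real n + 1) * u^2 / 2" if j: "j \<in> {1..n}" for j
  proof -
    have "a j \<bullet> s = (\<Sum>i\<in>{1..n}. a j \<bullet> a i)" by (simp add: s_def inner_sum_right)
    also have "\<dots> = (\<Sum>i\<in>{1..n}. u^2/2 + (if i = j then u^2/2 else 0))"
    proof (rule sum.cong)
      fix i assume i: "i \<in> {1..n}"
      show "a j \<bullet> a i = u^2/2 + (if i = j then u^2/2 else 0)"
        using aa[OF j i] by auto
    qed simp
    also have "\<dots> = real n * u^2/2 + u^2/2"
      using j by (simp add: sum.distrib)
    finally show ?thesis by (simp add: algebra_simps)
  qed
  have ss: "s \<bullet> s = real n * (real n + 1) * u^2 / 2"
  proof -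
    have "s \<bullet> s = (\<Sum>j\<in>{1..n}. a j \<bullet> s)" by (simp add: s_def inner_sum_left)
    also have "\<dots> = (\<Sum>j\<in>{1..n}. (real n + 1) * u^2 / 2)" by (rule sum.cong[OF refl as])
    finally show ?thesis by simp
  qed
  have ee: "(A 0 - G) \<bullet> (A 0 - G) = u^2 * (real n + 1) / (2 * real n)"
  proof -
    have "(A 0 - G) \<bullet> (A 0 - G) = (1 / real n) * (1 / real n) * (s \<bullet> s)"
      unfolding e by simp
    also have "\<dots> = (1 / real n) * (1 / real n) * (real n * (real n + 1) * u^2 / 2)" by (simp add: ss)
    also have "\<dots> = u^2 * (real n + 1) / (2 * real n)" using nz by (simp add: divide_simps)
    finally show ?thesis .
  qed
  show "(A 0 - G) \<bullet> (A 0 - G) = u^2 * (real n + 1) / (2 * real n)" by (rule ee)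
  have ae: "a i \<bullet> (A 0 - G) = -(u^2 * (real n + 1) / (2 * real n))" if i: "i \<in> {1..n}" for i
  proof -
    have "a i \<bullet> (A 0 - G) = - (1 / real n) * (a i \<bullet> s)" unfolding e by simp
    also have "\<dots> = -(u^2 * (real n + 1) / (2 * real n))" using as[OF i] nz by (simp add: divide_simps)
    finally show ?thesis .
  qed
  have wi: "A i - G = a i + (A 0 - G)" for i by (simp add: a_def)
  show "\<forall>i\<in>{1..n}. (A i - G) \<bullet> (A 0 - G) = 0"
  proof
    fix i assume i: "i \<in> {1..n}"
    show "(A i - G) \<bullet> (A 0 - G) = 0" unfolding wi[of i] inner_add_left ae[OF i] ee by simp
  qed
  show "\<forall>i\<in>{1..n}. (A i - G) \<bullet> (A i - G) = u^2 * (real n - 1) / (2 * real n)"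
  proof
    fix i assume i: "i \<in> {1..n}"
    have "(A i - G) \<bullet> (A i - G) = a i \<bullet> a i + 2 * (a i \<bullet> (A 0 - G)) + (A 0 - G) \<bullet> (A 0 - G)"
      unfolding wi[of i] by (simp add: inner_add_left inner_add_right inner_commute[of "A 0 - G" "a i"])
    also have "\<dots> = u^2 * (real n - 1) / (2 * real n)"
      using aa[OF i i] ae[OF i] ee nz by (simp add: divide_simps) (simp add: algebra_simps)
    finally show "(A i - G) \<bullet> (A i - G) = u^2 * (real n - 1) / (2 * real n)" .
  qed
  show "(\<Sum>i\<in>{1..n}. A i - G) = 0"
    using nz by (simp add: sum_subtractf G sum_constant_scaleR)
qed


lemma inner_comb:
  fixes p q :: "'a::real_inner"
  shows "(x *\<^sub>R p + y *\<^sub>R q) \<bullet> (x *\<^sub>R p + y *\<^sub>R q) = x*x*(p \<bullet> p) + 2*x*y*(p \<bullet> q) + y*y*(q \<bullet> q)"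
  by (simp add: inner_add_left inner_add_right inner_commute[of q p] algebra_simps)

lemma inner_diff_sq:
  fixes x y :: "'a::real_inner"
  shows "(x - y) \<bullet> (x - y) = x \<bullet> x - 2 * (x \<bullet> y) + y \<bullet> y"
  by (simp add: inner_diff_left inner_diff_right inner_commute[of y x])

lemma arith1:
  fixes n u :: real
  assumes "n > 0"
  shows "(1/(n+1))*(1/(n+1))*(u^2*(n+1)/(2*n)) + u^2*(n-1)/(2*n) = (n/(n+1))*(n/(n+1))*(u^2*(n+1)/(2*n))"
proof -
  have a: "n + 1 > 0" using assms by simp
  have "(1/(n+1))*(1/(n+1))*(u^2*(n+1)/(2*n)) = u^2 / (2*n*(n+1))"
    using assms a by (simp add: divide_simps)
  moreover have "(n/(n+1))*(n/(n+1))*(u^2*(n+1)/(2*n)) = u^2 * n / (2*(n+1))"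
    using assms a by (simp add: divide_simps)
  moreover have "u^2 / (2*n*(n+1)) + u^2*(n-1)/(2*n) = u^2 * n / (2*(n+1))"
    using assms a by (simp add: divide_simps) (simp add: algebra_simps)
  ultimately show ?thesis by simp
qed

theorem theorem5p2:
  fixes n :: nat and A :: "nat \<Rightarrow> 'a::euclidean_space" and u R :: real
  assumes "n \<ge> 2"
    and "DIM('a) \<ge> n + 1"
    and "regular_simplex n A"
    and "u = dist (A 0) (A 1)"
    and "R = circumradius n A"
  defines "Q0 \<equiv> reflect_in (affine hull (A ` {1..n})) (A 0)"
    and "\<Omega> \<equiv> {Q. regular_simplex n (A(0 := Q))}"
  shows "(\<lambda>Q. dist Q (A 0)) ` \<Omega> = {0 .. sqrt (2 * (real n + 1) / real n) * u}
     \<and> (\<lambda>Q. dist Q (A 0)) ` \<Omega> = {0 .. 2 * (real n + 1) / real n * R}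
     \<and> A 0 \<in> \<Omega> \<and> dist (A 0) (A 0) = 0
     \<and> Q0 \<in> \<Omega> \<and> dist Q0 (A 0) = sqrt (2 * (real n + 1) / real n) * u"
proof -
  have n1: "n \<ge> 1" using assms(1) by simp
  have nz: "real n \<noteq> 0" "real n > 0" using n1 by auto
  have R1: "is_simplex n A"
    and eqd: "\<forall>i\<in>{0..n}. \<forall>j\<in>{0..n}. \<forall>k\<in>{0..n}. \<forall>l\<in>{0..n}.
        i \<noteq> j \<longrightarrow> k \<noteq> l \<longrightarrow> dist (A i) (A j) = dist (A k) (A l)"
    using assms(3) unfolding regular_simplex_def by (rule conjunct1, rule conjunct2)
  have inj: "inj_on A {0..n}" using R1 unfolding is_simplex_def by (rule conjunct1)
  have d: "\<forall>i\<in>{0..n}. \<forall>j\<in>{0..n}. i \<noteq> j \<longrightarrow> dist (A i) (A j) = u"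
  proof (intro ballI impI)
    fix i j assume ij: "i \<in> {0..n}" "j \<in> {0..n}" "i \<noteq> j"
    have "(0::nat) \<in> {0..n}" "(1::nat) \<in> {0..n}" "(0::nat) \<noteq> 1" using n1 by auto
    then have "dist (A i) (A j) = dist (A 0) (A 1)" using eqd[rule_format, OF ij(1,2)] ij(3) by simp
    then show "dist (A i) (A j) = u" using assms(4) by simp
  qed
  have upos: "u > 0"
  proof -
    have "A 0 \<noteq> A 1" using inj_onD[OF inj, of 0 1] n1 by auto
    then show ?thesis using assms(4) by simp
  qed
  define G where "G = (1 / real n) *\<^sub>R (\<Sum>i\<in>{1..n}. A i)"
  note geo = equi_geom[OF upos n1 d G_def]
  define e where "e = A 0 - G"
  define h where "h = norm e"
  define w where "w i = A i - G" for i
  define r2 where "r2 = u^2 * (real n - 1) / (2 * real n)"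
  have ee: "e \<bullet> e = u^2 * (real n + 1) / (2 * real n)" using geo(1) by (simp add: e_def)
  have we: "w i \<bullet> e = 0" if "i \<in> {1..n}" for i using geo(2) that by (simp add: e_def w_def)
  have ww: "w i \<bullet> w i = r2" if "i \<in> {1..n}" for i using geo(3) that by (simp add: r2_def w_def)
  have sw: "(\<Sum>i\<in>{1..n}. w i) = 0" using geo(4) by (simp add: w_def)
  have h2: "h^2 = u^2 * (real n + 1) / (2 * real n)" by (simp add: h_def power2_norm_eq_inner ee)
  have hpos: "h > 0"
  proof -
    have "h^2 > 0" unfolding h2 using upos nz by simp
    moreover have "h \<ge> 0" by (simp add: h_def)
    ultimately show ?thesis by (metis less_eq_real_def power_zero_numeral zero_less_power2)
  qed
  have ehh: "e \<bullet> e = h^2" by (simp add: h_def power2_norm_eq_inner)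
  have uh: "h^2 + r2 = u^2" unfolding h2 r2_def using nz by (simp add: field_simps)
  have dq: "(dist Q (A i))^2 = (Q - G) \<bullet> (Q - G) - 2 * ((Q - G) \<bullet> w i) + r2"
    if i: "i \<in> {1..n}" for Q i
  proof -
    have "Q - A i = (Q - G) - w i" by (simp add: w_def)
    then have "(dist Q (A i))^2 = ((Q - G) - w i) \<bullet> ((Q - G) - w i)"
      by (simp only: dist_norm power2_norm_eq_inner)
    then have "(dist Q (A i))^2 = (Q - G) \<bullet> (Q - G) - 2 * ((Q - G) \<bullet> w i) + w i \<bullet> w i"
      by (simp only: inner_diff_sq)
    then show ?thesis using ww[OF i] by simp
  qed
  have inO: "Q \<in> \<Omega>" if orth: "\<forall>i\<in>{1..n}. (Q - G) \<bullet> w i = 0" and nq: "(Q - G) \<bullet> (Q - G) = h^2" for Q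
  proof -
    have di: "dist Q (A i) = u" if i: "i \<in> {1..n}" for i
    proof -
      have "(dist Q (A i))^2 = u^2" using dq[OF i, of Q] orth i nq uh by simp
      then show ?thesis using upos by (simp add: power2_eq_imp_eq)
    qed
    have "regular_simplex n (A(0 := Q))"
    proof (rule equilateral_regular[OF upos], intro ballI impI)
      fix i j assume ij: "i \<in> {0..n}" "j \<in> {0..n}" "i \<noteq> j"
      show "dist ((A(0 := Q)) i) ((A(0 := Q)) j) = u"
      proof (cases "i = 0")
        case True
        then show ?thesis using ij di[of j] by auto
      next
        case False
        show ?thesis
        proof (cases "j = 0")
          case True
          then show ?thesis using ij di[of i] False by (auto simp: dist_commute)
        next
          case False2: False
          then show ?thesis using ij d False by auto
        qed
      qed
    qed
    then show ?thesis by (simp add: assms(7))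
  qed
  have nO: "(Q - G) \<bullet> (Q - G) = h^2" if Q: "Q \<in> \<Omega>" for Q
  proof -
    have reg: "regular_simplex n (A(0 := Q))" using Q by (simp add: assms(7))
    have dQ: "dist Q (A i) = u" if i: "i \<in> {1..n}" for i
    proof -
      have m: "0 \<in> {0..n}" "i \<in> {0..n}" "(1::nat) \<in> {0..n}" "(2::nat) \<in> {0..n}" "0 \<noteq> i" "(1::nat) \<noteq> 2"
        using i assms(1) by auto
      have eq4: "\<forall>i\<in>{0..n}. \<forall>j\<in>{0..n}. \<forall>k\<in>{0..n}. \<forall>l\<in>{0..n}.
        i \<noteq> j \<longrightarrow> k \<noteq> l \<longrightarrow> dist ((A(0 := Q)) i) ((A(0 := Q)) j) = dist ((A(0 := Q)) k) ((A(0 := Q)) l)"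
        using reg unfolding regular_simplex_def by (rule conjunct2)
      have "dist ((A(0 := Q)) 0) ((A(0 := Q)) i) = dist ((A(0 := Q)) 1) ((A(0 := Q)) 2)"
        by (rule eq4[rule_format, OF m])
      moreover have "dist (A 1) (A 2) = u" using d assms(1) by auto
      ultimately show ?thesis using i by simp
    qed
    have "real n * u^2 = (\<Sum>i\<in>{1..n}. (dist Q (A i))^2)" using dQ by simp
    also have "\<dots> = (\<Sum>i\<in>{1..n}. (Q - G) \<bullet> (Q - G) - 2 * ((Q - G) \<bullet> w i) + r2)"
      by (rule sum.cong[OF refl dq])
    also have "\<dots> = real n * ((Q - G) \<bullet> (Q - G)) - 2 * ((Q - G) \<bullet> (\<Sum>i\<in>{1..n}. w i)) + real n * r2"
      by (simp add: sum.distrib sum_subtractf inner_sum_right sum_distrib_left)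
    also have "\<dots> = real n * ((Q - G) \<bullet> (Q - G) + r2)" using sw by (simp add: algebra_simps)
    finally have "u^2 = (Q - G) \<bullet> (Q - G) + r2" using nz by simp
    then show ?thesis using uh by simp
  qed
  have normQ: "norm (Q - G) = h" if "Q \<in> \<Omega>" for Q
  proof -
    have "(norm (Q - G))^2 = h^2" using nO[OF that] by (simp add: power2_norm_eq_inner)
    then show ?thesis using hpos by (simp add: power2_eq_imp_eq)
  qed
  obtain m where nm: "n = Suc m" using n1 by (cases n) auto
  define S where "S = insert e (w ` {1..m})"
  have cardS: "card S \<le> n"
  proof -
    have "card S \<le> Suc (card (w ` {1..m}))" unfolding S_def by (simp add: card_insert_if)
    also have "\<dots> \<le> Suc m" using card_image_le[of "{1..m}" w] by simp
    finally show ?thesis using nm by simp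
  qed
  have "dim S \<le> card S" by (rule dim_le_card[OF span_superset]) (simp add: S_def)
  then have "dim S < DIM('a)" using cardS assms(2) by simp
  then obtain f :: 'a where f0: "f \<noteq> 0" and fS: "span S \<subseteq> {x. f \<bullet> x = 0}"
    using lowdim_subset_hyperplane by blast
  have wspan: "w i \<in> span S" if i: "i \<in> {1..n}" for i
  proof (cases "i \<le> m")
    case True
    then show ?thesis using i by (intro span_base) (simp add: S_def)
  next
    case False
    then have iN: "i = n" using i nm by simp
    have "(\<Sum>i\<in>{1..n}. w i) = (\<Sum>i\<in>{1..m}. w i) + w n" unfolding nm by simp
    then have "w n = - (\<Sum>i\<in>{1..m}. w i)" using sw by (simp add: add_eq_0_iff)
    moreover have "(\<Sum>i\<in>{1..m}. w i) \<in> span S"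
      by (intro span_sum span_base) (simp add: S_def)
    ultimately show ?thesis using iN span_neg by metis
  qed
  have fe: "f \<bullet> e = 0" using fS span_base[of e S] by (auto simp: S_def)
  have fw: "f \<bullet> w i = 0" if "i \<in> {1..n}" for i using fS wspan[OF that] by auto
  define f' where "f' = (h / norm f) *\<^sub>R f"
  have f'f': "f' \<bullet> f' = h^2" using f0 by (simp add: f'_def power2_norm_eq_inner[symmetric] power2_eq_square)
  have f'e: "e \<bullet> f' = 0" using fe by (simp add: f'_def inner_commute)
  have f'w: "f' \<bullet> w i = 0" if "i \<in> {1..n}" for i using fw[OF that] by (simp add: f'_def)
  have img: "(\<lambda>Q. dist Q (A 0)) ` \<Omega> = {0 .. 2 * h}"
  proof
    show "(\<lambda>Q. dist Q (A 0)) ` \<Omega> \<subseteq> {0 .. 2 * h}"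
    proof
      fix t assume "t \<in> (\<lambda>Q. dist Q (A 0)) ` \<Omega>"
      then obtain Q where Q: "Q \<in> \<Omega>" and t: "t = dist Q (A 0)" by auto
      have "dist Q (A 0) \<le> dist Q G + dist G (A 0)" by (rule dist_triangle)
      also have "\<dots> = 2 * h" using normQ[OF Q] by (simp add: dist_norm h_def e_def norm_minus_commute)
      finally show "t \<in> {0 .. 2 * h}" using t by simp
    qed
    show "{0 .. 2 * h} \<subseteq> (\<lambda>Q. dist Q (A 0)) ` \<Omega>"
    proof
      fix t assume t: "t \<in> {0 .. 2 * h}"
      define a where "a = 1 - t^2 / (2 * h^2)"
      define b where "b = sqrt (1 - a^2)"
      have "t^2 \<le> (2*h)^2" using t by (intro power_mono) auto
      then have "t^2 / (2 * h^2) \<le> 2" using hpos by (simp add: divide_simps power2_eq_square)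
      moreover have "t^2 / (2 * h^2) \<ge> 0" by simp
      ultimately have a1: "-1 \<le> a" "a \<le> 1" unfolding a_def by auto
      have "a^2 \<le> 1" using a1 by (simp add: abs_square_le_1)
      then have bb: "b * b = 1 - a^2" unfolding b_def by simp
      define Q where "Q = G + (a *\<^sub>R e + b *\<^sub>R f')"
      have QG: "Q - G = a *\<^sub>R e + b *\<^sub>R f'" by (simp add: Q_def)
      have QA: "Q - A 0 = (a - 1) *\<^sub>R e + b *\<^sub>R f'" by (simp add: Q_def e_def algebra_simps)
      have QO: "Q \<in> \<Omega>"
      proof (rule inO)
        show "\<forall>i\<in>{1..n}. (Q - G) \<bullet> w i = 0"
          using we f'w by (simp add: QG inner_add_left inner_commute[of e])
        have "(Q - G) \<bullet> (Q - G) = a*a*(e \<bullet> e) + 2*a*b*(e \<bullet> f') + b*b*(f' \<bullet> f')"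
          unfolding QG by (rule inner_comb)
        also have "\<dots> = (a*a + b*b) * h^2" unfolding ehh f'e f'f' by (simp add: algebra_simps)
        also have "\<dots> = (a*a + (1 - a^2)) * h^2" by (simp only: bb)
        also have "\<dots> = h^2" by (simp add: power2_eq_square)
        finally show "(Q - G) \<bullet> (Q - G) = h^2" .
      qed
      have dt: "dist Q (A 0) = t"
      proof -
        have "(dist Q (A 0))^2 = (Q - A 0) \<bullet> (Q - A 0)" by (simp add: dist_norm power2_norm_eq_inner)
        also have "\<dots> = (a-1)*(a-1)*(e \<bullet> e) + 2*(a-1)*b*(e \<bullet> f') + b*b*(f' \<bullet> f')"
          unfolding QA by (rule inner_comb)
        also have "\<dots> = ((a-1)*(a-1) + b*b) * h^2" unfolding ehh f'e f'f' by (simp add: algebra_simps)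
        also have "\<dots> = ((a-1)*(a-1) + (1 - a^2)) * h^2" by (simp only: bb)
        also have "\<dots> = (2 - 2*a) * h^2" by (simp add: power2_eq_square algebra_simps)
        finally have c1: "(dist Q (A 0))^2 = (2 - 2*a) * h^2" .
        have "2 - 2*a = t^2 / h^2" by (simp add: a_def)
        then have "(dist Q (A 0))^2 = t^2" using c1 hpos by simp
        then show ?thesis by (rule power2_eq_imp_eq) (use t in auto)
      qed
      show "t \<in> (\<lambda>Q. dist Q (A 0)) ` \<Omega>"
        using image_eqI[where f="\<lambda>Q. dist Q (A 0)", OF dt[symmetric] QO] by simp
    qed
  qed
  have injA1: "inj_on A {1..n}" by (rule inj_on_subset[OF inj]) auto
  have sumAG: "(\<Sum>i\<in>{1..n}. A i) = real n *\<^sub>R G" using nz by (simp add: G_def)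
  define H where "H = affine hull (A ` {1..n})"
  have Gin: "G \<in> H"
  proof -
    have cA: "card (A ` {1..n}) = n" using card_image[OF injA1] by simp
    have "sum (\<lambda>v. 1 / real n) (A ` {1..n}) = 1" using nz cA by simp
    moreover have "(\<Sum>v\<in>A ` {1..n}. (1 / real n) *\<^sub>R v) = G"
    proof -
      have "(\<Sum>v\<in>A ` {1..n}. v) = (\<Sum>i\<in>{1..n}. A i)" using sum.reindex[OF injA1, of "\<lambda>v. v"] by simp
      then show ?thesis by (simp add: G_def flip: scaleR_sum_right)
    qed
    ultimately show ?thesis unfolding H_def affine_hull_finite[OF finite_imageI[OF finite_atLeastAtMost]]
      by (rule_tac CollectI, rule_tac exI[where x="\<lambda>v. 1 / real n"], rule_tac conjI)
  qed
  have orthH: "(z - G) \<bullet> e = 0" if z: "z \<in> H" for z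
  proof -
    have "\<exists>c. sum c (A ` {1..n}) = 1 \<and> (\<Sum>v\<in>A ` {1..n}. c v *\<^sub>R v) = z"
      using z unfolding H_def affine_hull_finite[OF finite_imageI[OF finite_atLeastAtMost]] by (rule CollectD)
    then obtain c where c: "sum c (A ` {1..n}) = 1" "(\<Sum>v\<in>A ` {1..n}. c v *\<^sub>R v) = z"
      by (elim exE conjE)
    have "z - G = (\<Sum>v\<in>A ` {1..n}. c v *\<^sub>R (v - G))" using sum_center[OF c(1)] c(2) by simp
    then have "(z - G) \<bullet> e = (\<Sum>v\<in>A ` {1..n}. c v * ((v - G) \<bullet> e))" by (simp add: inner_sum_left)
    also have "\<dots> = 0"
    proof (rule sum.neutral, rule ballI)
      fix v assume "v \<in> A ` {1..n}"
      then obtain i where i: "i \<in> {1..n}" "v = A i" by blast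
      show "c v * ((v - G) \<bullet> e) = 0" using we[OF i(1)] i(2) by (simp add: w_def)
    qed
    finally show ?thesis .
  qed
  have cp: "closest_point H (A 0) = G"
  proof (rule closest_point_unique[symmetric])
    show "convex H" unfolding H_def by (rule convex_affine_hull)
    show "closed H" unfolding H_def by (rule closed_affine_hull)
    show "G \<in> H" by (rule Gin)
    show "\<forall>z\<in>H. dist (A 0) G \<le> dist (A 0) z"
    proof
      fix z assume z: "z \<in> H"
      have "A 0 - z = e - (z - G)" by (simp add: e_def)
      then have "(dist (A 0) z)^2 = (e - (z - G)) \<bullet> (e - (z - G))" by (simp only: dist_norm power2_norm_eq_inner)
      also have "\<dots> = e \<bullet> e - 2 * (e \<bullet> (z - G)) + (z - G) \<bullet> (z - G)" by (rule inner_diff_sq)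
      also have "\<dots> = e \<bullet> e + (z - G) \<bullet> (z - G)" using orthH[OF z] by (simp add: inner_commute[of e "z - G"])
      finally have d1: "(dist (A 0) z)^2 \<ge> e \<bullet> e" by simp
      have d2: "(dist (A 0) G)^2 = e \<bullet> e" by (simp add: dist_norm power2_norm_eq_inner e_def)
      show "dist (A 0) G \<le> dist (A 0) z" by (rule power2_le_imp_le) (use d1 d2 in simp_all)
    qed
  qed
  have Q0e: "Q0 = G - e" unfolding assms(6) reflect_in_def H_def[symmetric] cp
    by (simp add: e_def scaleR_2 algebra_simps)
  have Q0O: "Q0 \<in> \<Omega>"
  proof (rule inO)
    show "\<forall>i\<in>{1..n}. (Q0 - G) \<bullet> w i = 0" using we by (simp add: Q0e inner_commute)
    show "(Q0 - G) \<bullet> (Q0 - G) = h^2" using ehh by (simp add: Q0e)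
  qed
  have dQ0: "dist Q0 (A 0) = 2 * h"
  proof -
    have "Q0 - A 0 = (-2) *\<^sub>R e" by (simp add: Q0e e_def scaleR_2 algebra_simps)
    then show ?thesis by (simp add: dist_norm h_def)
  qed
  define R0 where "R0 = real n / (real n + 1) * h"
  define C where "C = G + (1 / (real n + 1)) *\<^sub>R e"
  have np: "real n + 1 \<noteq> 0" "real n + 1 > 0" by auto
  have dC0: "dist C (A 0) = R0"
  proof -
    have "C - A 0 = (- (real n / (real n + 1))) *\<^sub>R e"
    proof -
      have "1 / (real n + 1) - 1 = - (real n / (real n + 1))" using np by (simp add: field_simps)
      then have "C - A 0 = (1 / (real n + 1) - 1) *\<^sub>R e" by (simp add: C_def e_def algebra_simps)
      then show ?thesis using \<open>1 / (real n + 1) - 1 = - (real n / (real n + 1))\<close> by simp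
    qed
    then show ?thesis by (simp add: dist_norm R0_def h_def)
  qed
  have dCi: "dist C (A i) = R0" if i: "i \<in> {1..n}" for i
  proof -
    have "C - A i = (1 / (real n + 1)) *\<^sub>R e + (-1) *\<^sub>R w i" by (simp add: C_def w_def)
    then have "(dist C (A i))^2 = (1 / (real n + 1))*(1 / (real n + 1))*(e \<bullet> e) + 2*(1 / (real n + 1))*(-1)*(e \<bullet> w i) + (-1)*(-1)*(w i \<bullet> w i)"
      by (simp only: dist_norm power2_norm_eq_inner inner_comb)
    also have "\<dots> = (1 / (real n + 1))*(1 / (real n + 1))*(u^2 * (real n + 1) / (2 * real n)) + u^2 * (real n - 1) / (2 * real n)"
      using we[OF i] ww[OF i] ee by (simp add: inner_commute r2_def)
    also have "\<dots> = (real n / (real n + 1))*(real n / (real n + 1))*(u^2 * (real n + 1) / (2 * real n))"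
      by (rule arith1) (use nz in simp)
    also have "\<dots> = (real n / (real n + 1))*(real n / (real n + 1))*h^2" by (simp only: h2)
    also have "\<dots> = R0^2" by (simp add: R0_def power2_eq_square)
    finally show ?thesis by (rule power2_eq_imp_eq) (use hpos in \<open>auto simp: R0_def\<close>)
  qed
  have dC: "\<forall>i\<in>{0..n}. dist C (A i) = R0"
  proof
    fix i assume "i \<in> {0..n}"
    then show "dist C (A i) = R0" using dC0 dCi by (cases "i = 0") auto
  qed
  have Chull: "C \<in> affine hull (A ` {0..n})"
  proof -
    have A0h: "A 0 \<in> affine hull (A ` {0..n})" by (rule hull_inc) auto
    have "G \<in> affine hull (A ` {0..n})" using Gin unfolding H_def by (rule subsetD[OF hull_mono, rotated]) auto
    then have "(1 / (real n + 1)) *\<^sub>R A 0 + (real n / (real n + 1)) *\<^sub>R G \<in> affine hull (A ` {0..n})"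
      using A0h np by (intro mem_affine affine_affine_hull) (auto simp: field_simps)
    moreover have "(1 / (real n + 1)) *\<^sub>R A 0 + (real n / (real n + 1)) *\<^sub>R G = C"
    proof -
      have eqn: "real n / (real n + 1) = 1 - 1 / (real n + 1)" using np by (simp add: field_simps)
      show ?thesis unfolding eqn by (simp add: C_def e_def scaleR_diff_left scaleR_diff_right algebra_simps)
    qed
    ultimately show ?thesis by simp
  qed
  have circ: "circumradius n A = R0"
    unfolding circumradius_def
  proof (rule the_equality)
    show "\<exists>c\<in>affine hull (A ` {0..n}). \<forall>i\<in>{0..n}. dist c (A i) = R0" using Chull dC by blast
    fix r assume "\<exists>c\<in>affine hull (A ` {0..n}). \<forall>i\<in>{0..n}. dist c (A i) = r"
    then obtain c where c: "c \<in> affine hull (A ` {0..n})" and dc: "\<forall>i\<in>{0..n}. dist c (A i) = r" by blast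
    have "c = C"
    proof (rule centroid_unique[OF _ c, where mu="\<lambda>v. 1 / (real n + 1)"])
      show "finite (A ` {0..n})" by simp
      have cA0: "card (A ` {0..n}) = n + 1" using card_image[OF inj] by simp
      show "sum (\<lambda>v. 1 / (real n + 1)) (A ` {0..n}) = 1" using np by (simp add: cA0)
      have "{0..n} = insert 0 {1..n}" by auto
      then have "(\<Sum>i\<in>{0..n}. A i) = A 0 + (\<Sum>i\<in>{1..n}. A i)" by simp
      then have "(\<Sum>v\<in>A ` {0..n}. (1 / (real n + 1)) *\<^sub>R v) = (1 / (real n + 1)) *\<^sub>R (A 0 + real n *\<^sub>R G)"
      proof -
        have "(\<Sum>v\<in>A ` {0..n}. v) = (\<Sum>i\<in>{0..n}. A i)" using sum.reindex[OF inj, of "\<lambda>v. v"] by simp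
        then show ?thesis using \<open>(\<Sum>i\<in>{0..n}. A i) = A 0 + (\<Sum>i\<in>{1..n}. A i)\<close> sumAG
          by (simp flip: scaleR_sum_right)
      qed
      also have "\<dots> = C"
      proof -
        have eqn: "real n / (real n + 1) = 1 - 1 / (real n + 1)" using np by (simp add: field_simps)
        have "(1 / (real n + 1)) *\<^sub>R (A 0 + real n *\<^sub>R G) = (1 / (real n + 1)) *\<^sub>R A 0 + (real n / (real n + 1)) *\<^sub>R G"
          by (simp add: scaleR_add_right)
        also have "\<dots> = C" unfolding eqn by (simp add: C_def e_def scaleR_diff_left scaleR_diff_right algebra_simps)
        finally show ?thesis .
      qed
      finally show "C = (\<Sum>v\<in>A ` {0..n}. (1 / (real n + 1)) *\<^sub>R v)" by simp
      show "\<forall>v\<in>A ` {0..n}. (c - C) \<bullet> (v - C) = ((dist c C)^2 + R0^2 - r^2) / 2"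
      proof
        fix v assume "v \<in> A ` {0..n}"
        then obtain i where i: "i \<in> {0..n}" "v = A i" by auto
        have "(c - C) \<bullet> (v - C) = ((dist c C)^2 + (dist v C)^2 - (dist c v)^2)/2" by (rule polar)
        then show "(c - C) \<bullet> (v - C) = ((dist c C)^2 + R0^2 - r^2) / 2"
          using dC dc i by (simp add: dist_commute)
      qed
    qed
    then show "r = R0" using dc dC0 by auto
  qed
  have hh: "sqrt (2 * (real n + 1) / real n) * u = 2 * h"
  proof (rule power2_eq_imp_eq)
    have "(sqrt (2 * (real n + 1) / real n) * u)^2 = 2 * (real n + 1) / real n * u^2"
      using nz by (simp add: power_mult_distrib)
    also have "\<dots> = (2 * h)^2" using nz by (simp add: h2 power_mult_distrib field_simps)
    finally show "(sqrt (2 * (real n + 1) / real n) * u)^2 = (2 * h)^2" .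
    show "0 \<le> sqrt (2 * (real n + 1) / real n) * u" using upos by simp
    show "0 \<le> 2 * h" using hpos by simp
  qed
  have hR: "2 * (real n + 1) / real n * R = 2 * h"
  proof -
    have k: "2 * (real n + 1) / real n * (real n / (real n + 1)) = 2" using nz np by (simp add: divide_simps)
    have "2 * (real n + 1) / real n * R = (2 * (real n + 1) / real n * (real n / (real n + 1))) * h"
      unfolding assms(5) circ R0_def by (simp only: mult.assoc)
    then show ?thesis by (simp only: k)
  qed
  have A0O: "A 0 \<in> \<Omega>" using assms(3) by (simp add: assms(7))
  show ?thesis using img hh hR A0O Q0O dQ0 by simp
qed

end
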